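(* Let $I$ be a resident-minimal instance and $J$ a resident-changeless and hospital-complete extension of $I$. Then $J$ is resident-minimal, $\mathrm{prop}(I)=\mathrm{prop}(J)$, and $\mathrm{tent}(I)\setminus\mathrm{pend}(I)\subseteq\mathrm{tent}(J)\subseteq\mathrm{tent}(I)$.
   Context: An instance $I$ consists of finite disjoint sets $R$ (residents) and $H$ (hospitals), a positive integer quota $q_h$ for each $h\in H$, for each $r\in R$ a preference list of $r$ (a sequence of distinct members of $H$, not necessarily all), and for each $h\in H$ a preference list of $h$ (a sequence of distinct members of $R$). A list is complete if it contains every member of the opposite side; an instance is hospital-complete if every hospital's list is complete. A match is a pair $(r,h)\in R\times H$. For a set $M$ of matches, $\mathrm{res}_h M=\{r:(r,h)\in M\}$, $\mathrm{res}\,M=\{r:(r,h)\in M\text{ for some }h\}$. $J$ is an extension of $I$ (same $R,H$, quotas) if every list of $J$ has the corresponding list of $I$ as a prefix; it is resident-changeless if every resident's list is the same in $I$ and $J$. An event is $(r,h)^+$ (proposal) or $(r,h)^-$ (rejection). For an event sequence $\sigma$, $\mathrm{prop}(\sigma)$, $\mathrm{rej}(\sigma)$ are the sets of matches proposed/rejected in $\sigma$, $\mathrm{tent}(\sigma)=\mathrm{prop}(\sigma)\setminus\mathrm{rej}(\sigma)$, and $\mathrm{pend}_I(\sigma)$ is the set of $(r,h)\in\mathrm{tent}(\sigma)$ with $r$ not on the list of $h$ in $I$. A match $(r,h)\in M$ is ousted from $M$ in $I$ if the list of $h$ in $I$ contains at least $q_h$ residents of $\mathrm{res}_h M$ and either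 $r$ is not on it or $r$ is preceded on it by at least $q_h$ residents of $\mathrm{res}_h M$. $I$-feasible sequences: the empty sequence is $I$-feasible; if $\sigma$ is $I$-feasible then $\sigma+(r,h)^+$ is $I$-feasible if $r\notin\mathrm{res}\,\mathrm{tent}(\sigma)$, $(r,h)\notin\mathrm{prop}(\sigma)$, $h$ is on the list of $r$ in $I$ and $(r,h')\in\mathrm{rej}(\sigma)$ for every $h'$ preceding $h$ on it; and $\sigma+(r,h)^-$ is $I$-feasible if $(r,h)$ is ousted from $\mathrm{prop}(\sigma)$ in $I$ and $(r,h)\notin\mathrm{rej}(\sigma)$. All maximal $I$-feasible sequences contain the same events; $\mathrm{prop}(I),\mathrm{tent}(I),\mathrm{pend}(I)$ denote $\mathrm{prop}(\sigma),\mathrm{tent}(\sigma),\mathrm{pend}_I(\sigma)$ for any maximal $I$-feasible $\sigma$. $I$ is resident-minimal if $\mathrm{prop}(I)$ equals the set of matches $(r,h)$ with $h$ on the list of $r$ in $I$. *)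

theory Defs
  imports Main
begin

record ('r,'h) inst =
  quota :: "'h \<Rightarrow> nat"
  rpref :: "'r \<Rightarrow> 'h list"
  hpref :: "'h \<Rightarrow> 'r list"

text \<open>An instance over resident set R and hospital set H (disjointness is
automatic since they live in different types). Lists of non-members are
required to be empty (they are irrelevant by convention).\<close>
definition valid_instance :: "'r set \<Rightarrow> 'h set \<Rightarrow> ('r,'h) inst \<Rightarrow> bool" where
  "valid_instance R H I \<longleftrightarrow> finite R \<and> finite H
     \<and> (\<forall>h\<in>H. quota I h > 0)
     \<and> (\<forall>r\<in>R. distinct (rpref I r) \<and> set (rpref I r) \<subseteq> H)
     \<and> (\<forall>h\<in>H. distinct (hpref I h) \<and> set (hpref I h) \<subseteq> R)
     \<and> (\<forall>r. r \<notin> R \<longrightarrow> rpref I r = [])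
     \<and> (\<forall>h. h \<notin> H \<longrightarrow> hpref I h = [])"

definition hospital_complete :: "'r set \<Rightarrow> 'h set \<Rightarrow> ('r,'h) inst \<Rightarrow> bool" where
  "hospital_complete R H I \<longleftrightarrow> (\<forall>h\<in>H. set (hpref I h) = R)"

definition is_extension :: "'r set \<Rightarrow> 'h set \<Rightarrow> ('r,'h) inst \<Rightarrow> ('r,'h) inst \<Rightarrow> bool" where
  "is_extension R H I J \<longleftrightarrow> valid_instance R H I \<and> valid_instance R H J
     \<and> (\<forall>h\<in>H. quota J h = quota I h)
     \<and> (\<forall>r. \<exists>zs. rpref J r = rpref I r @ zs)
     \<and> (\<forall>h. \<exists>zs. hpref J h = hpref I h @ zs)"

definition resident_changeless :: "('r,'h) inst \<Rightarrow> ('r,'h) inst \<Rightarrow> bool" where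
  "resident_changeless I J \<longleftrightarrow> (\<forall>r. rpref J r = rpref I r)"

datatype ('r,'h) event = Prop 'r 'h | Rej 'r 'h

definition proposed :: "('r,'h) event list \<Rightarrow> ('r \<times> 'h) set" where
  "proposed \<sigma> = {(r,h). Prop r h \<in> set \<sigma>}"

definition rejected :: "('r,'h) event list \<Rightarrow> ('r \<times> 'h) set" where
  "rejected \<sigma> = {(r,h). Rej r h \<in> set \<sigma>}"

definition tentative :: "('r,'h) event list \<Rightarrow> ('r \<times> 'h) set" where
  "tentative \<sigma> = proposed \<sigma> - rejected \<sigma>"

definition pending_seq :: "('r,'h) inst \<Rightarrow> ('r,'h) event list \<Rightarrow> ('r \<times> 'h) set" where
  "pending_seq I \<sigma> = {(r,h) \<in> tentative \<sigma>. r \<notin> set (hpref I h)}"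

definition res_h :: "('r \<times> 'h) set \<Rightarrow> 'h \<Rightarrow> 'r set" where
  "res_h M h = {r. (r,h) \<in> M}"

definition res :: "('r \<times> 'h) set \<Rightarrow> 'r set" where
  "res M = {r. \<exists>h. (r,h) \<in> M}"

definition ousted :: "('r,'h) inst \<Rightarrow> ('r \<times> 'h) set \<Rightarrow> 'r \<Rightarrow> 'h \<Rightarrow> bool" where
  "ousted I M r h \<longleftrightarrow> (r,h) \<in> M
     \<and> card (set (hpref I h) \<inter> res_h M h) \<ge> quota I h
     \<and> (r \<notin> set (hpref I h)
        \<or> card (set (takeWhile (\<lambda>x. x \<noteq> r) (hpref I h)) \<inter> res_h M h) \<ge> quota I h)"

inductive feasible :: "('r,'h) inst \<Rightarrow> ('r,'h) event list \<Rightarrow> bool" for I where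
  Nil: "feasible I []"
| Propose: "\<lbrakk> feasible I \<sigma>; r \<notin> res (tentative \<sigma>); (r,h) \<notin> proposed \<sigma>;
             h \<in> set (rpref I r);
             \<forall>h' \<in> set (takeWhile (\<lambda>x. x \<noteq> h) (rpref I r)). (r,h') \<in> rejected \<sigma> \<rbrakk>
           \<Longrightarrow> feasible I (\<sigma> @ [Prop r h])"
| Reject: "\<lbrakk> feasible I \<sigma>; ousted I (proposed \<sigma>) r h; (r,h) \<notin> rejected \<sigma> \<rbrakk>
           \<Longrightarrow> feasible I (\<sigma> @ [Rej r h])"

definition maximal_feasible :: "('r,'h) inst \<Rightarrow> ('r,'h) event list \<Rightarrow> bool" where
  "maximal_feasible I \<sigma> \<longleftrightarrow> feasible I \<sigma> \<and> \<not> (\<exists>e. feasible I (\<sigma> @ [e]))"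

text \<open>prop(I), tent(I), pend(I): computed from any maximal I-feasible sequence.\<close>
definition some_max :: "('r,'h) inst \<Rightarrow> ('r,'h) event list" where
  "some_max I = (SOME \<sigma>. maximal_feasible I \<sigma>)"

definition propI :: "('r,'h) inst \<Rightarrow> ('r \<times> 'h) set" where
  "propI I = proposed (some_max I)"

definition tentI :: "('r,'h) inst \<Rightarrow> ('r \<times> 'h) set" where
  "tentI I = tentative (some_max I)"

definition pendI :: "('r,'h) inst \<Rightarrow> ('r \<times> 'h) set" where
  "pendI I = pending_seq I (some_max I)"

definition resident_minimal :: "('r,'h) inst \<Rightarrow> bool" where
  "resident_minimal I \<longleftrightarrow> propI I = {(r,h). h \<in> set (rpref I r)}"

end

theory Submission
  imports Defs
begin

lemma feasible_inv:
  assumes "feasible K \<tau>"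
  shows "(\<forall>r h. Prop r h \<in> set \<tau> \<longrightarrow> h \<in> set (rpref K r)
            \<and> (\<forall>h'\<in>set (takeWhile (\<lambda>x. x \<noteq> h) (rpref K r)). Rej r h' \<in> set \<tau>))
         \<and> (\<forall>r h. Rej r h \<in> set \<tau> \<longrightarrow> Prop r h \<in> set \<tau>)"
  using assms
proof (induction rule: feasible.induct)
  case Nil
  then show ?case by simp
next
  case (Propose \<sigma> r h)
  then show ?case by (auto simp: rejected_def)
next
  case (Reject \<sigma> r h)
  then show ?case by (auto simp: ousted_def proposed_def)
qed

lemma ousted_mono:
  assumes "ousted K M r h" "M \<subseteq> M'" "(r,h) \<in> M'"
  shows "ousted K M' r h"
proof -
  have rs: "res_h M h \<subseteq> res_h M' h" using assms(2) by (auto simp: res_h_def)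
  have c1: "card (set (hpref K h) \<inter> res_h M h) \<le> card (set (hpref K h) \<inter> res_h M' h)"
    by (rule card_mono) (use rs in auto)
  have c2: "card (set (takeWhile (\<lambda>x. x \<noteq> r) (hpref K h)) \<inter> res_h M h)
     \<le> card (set (takeWhile (\<lambda>x. x \<noteq> r) (hpref K h)) \<inter> res_h M' h)"
    by (rule card_mono) (use rs in auto)
  show ?thesis using assms c1 c2 unfolding ousted_def by linarith
qed

lemma ousted_inv:
  assumes "feasible K \<tau>"
  shows "\<forall>r h. Rej r h \<in> set \<tau> \<longrightarrow> ousted K (proposed \<tau>) r h"
  using assms
proof (induction rule: feasible.induct)
  case Nil
  then show ?case by simp
next
  case (Propose \<sigma> r h)
  show ?case
  proof (intro allI impI)
    fix r' h' assume "Rej r' h' \<in> set (\<sigma> @ [Prop r h])"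
    then have "ousted K (proposed \<sigma>) r' h'" using Propose by auto
    note o = this
    have m: "(r',h') \<in> proposed \<sigma>" using o by (simp add: ousted_def)
    have s: "proposed \<sigma> \<subseteq> proposed (\<sigma> @ [Prop r h])" by (auto simp: proposed_def)
    show "ousted K (proposed (\<sigma> @ [Prop r h])) r' h'"
      using ousted_mono[OF o s] m s by blast
  qed
next
  case (Reject \<sigma> r h)
  have pe: "proposed (\<sigma> @ [Rej r h]) = proposed \<sigma>" by (auto simp: proposed_def)
  show ?case using Reject pe by auto
qed

lemma order_lemma:
  "a \<in> set xs \<Longrightarrow> b \<in> set xs \<Longrightarrow> a \<noteq> b \<Longrightarrow>
   a \<in> set (takeWhile (\<lambda>x. x \<noteq> b) xs) \<or> b \<in> set (takeWhile (\<lambda>x. x \<noteq> a) xs)"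
  by (induction xs) auto

lemma confluence:
  assumes "feasible K \<sigma>" "maximal_feasible K \<tau>"
  shows "set \<sigma> \<subseteq> set \<tau>"
  using assms(1)
proof (induction rule: feasible.induct)
  case Nil
  then show ?case by simp
next
  case (Propose \<sigma> r h)
  have ft: "feasible K \<tau>" using assms(2) by (simp add: maximal_feasible_def)
  note inv = feasible_inv[OF ft]
  show ?case
  proof (rule ccontr)
    assume "\<not> set (\<sigma> @ [Prop r h]) \<subseteq> set \<tau>"
    then have nP: "Prop r h \<notin> set \<tau>" using Propose by auto
    have nres: "r \<notin> res (tentative \<tau>)"
    proof
      assume "r \<in> res (tentative \<tau>)"
      then obtain h'' where P'': "Prop r h'' \<in> set \<tau>" and R'': "Rej r h'' \<notin> set \<tau>"
        by (auto simp: res_def tentative_def proposed_def rejected_def)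
      have ne: "h'' \<noteq> h" using nP P'' by auto
      have h''in: "h'' \<in> set (rpref K r)" using inv P'' by blast
      from order_lemma[OF h''in Propose.hyps(4) ne] show False
      proof
        assume "h'' \<in> set (takeWhile (\<lambda>x. x \<noteq> h) (rpref K r))"
        then have "Rej r h'' \<in> set \<sigma>" using Propose.hyps(5) by (auto simp: rejected_def)
        then show False using R'' Propose.IH by auto
      next
        assume "h \<in> set (takeWhile (\<lambda>x. x \<noteq> h'') (rpref K r))"
        then have "Rej r h \<in> set \<tau>" using inv P'' by blast
        then have "Prop r h \<in> set \<tau>" using inv by blast
        then show False using nP by simp
      qed
    qed
    have "feasible K (\<tau> @ [Prop r h])"
    proof (rule feasible.Propose[OF ft nres])
      show "(r, h) \<notin> proposed \<tau>" using nP by (simp add: proposed_def)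
      show "h \<in> set (rpref K r)" by fact
      show "\<forall>h'\<in>set (takeWhile (\<lambda>x. x \<noteq> h) (rpref K r)). (r, h') \<in> rejected \<tau>"
        using Propose.hyps(5) Propose.IH by (auto simp: rejected_def)
    qed
    then show False using assms(2) by (auto simp: maximal_feasible_def)
  qed
next
  case (Reject \<sigma> r h)
  have ft: "feasible K \<tau>" using assms(2) by (simp add: maximal_feasible_def)
  show ?case
  proof (rule ccontr)
    assume "\<not> set (\<sigma> @ [Rej r h]) \<subseteq> set \<tau>"
    then have nR: "Rej r h \<notin> set \<tau>" using Reject by auto
    have sub: "proposed \<sigma> \<subseteq> proposed \<tau>" using Reject.IH by (auto simp: proposed_def)
    have "(r,h) \<in> proposed \<sigma>" using Reject.hyps(2) by (simp add: ousted_def)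
    then have "ousted K (proposed \<tau>) r h"
      using ousted_mono[OF Reject.hyps(2) sub] sub by auto
    moreover have "(r,h) \<notin> rejected \<tau>" using nR by (simp add: rejected_def)
    ultimately have "feasible K (\<tau> @ [Rej r h])" using feasible.Reject[OF ft] by blast
    then show False using assms(2) by (auto simp: maximal_feasible_def)
  qed
qed

lemma rejected_char:
  assumes "maximal_feasible K \<tau>"
  shows "rejected \<tau> = {(r,h). ousted K (proposed \<tau>) r h}"
proof -
  have ft: "feasible K \<tau>" using assms by (simp add: maximal_feasible_def)
  show ?thesis
  proof
    show "rejected \<tau> \<subseteq> {(r,h). ousted K (proposed \<tau>) r h}"
      using ousted_inv[OF ft] by (auto simp: rejected_def)
    show "{(r,h). ousted K (proposed \<tau>) r h} \<subseteq> rejected \<tau>"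
    proof (rule ccontr)
      assume "\<not> ?thesis"
      then obtain r h where "ousted K (proposed \<tau>) r h" "(r,h) \<notin> rejected \<tau>" by auto
      then have "feasible K (\<tau> @ [Rej r h])" using feasible.Reject[OF ft] by blast
      then show False using assms by (auto simp: maximal_feasible_def)
    qed
  qed
qed

lemma proposed_acc:
  assumes "feasible K \<tau>"
  shows "proposed \<tau> \<subseteq> {(r,h). h \<in> set (rpref K r)}"
  using feasible_inv[OF assms] by (auto simp: proposed_def)

lemma feasible_bounded:
  assumes "valid_instance R H K" "feasible K \<tau>"
  shows "length \<tau> < Suc (card ((\<lambda>(r,h). Prop r h) ` (R \<times> H) \<union> (\<lambda>(r,h). Rej r h) ` (R \<times> H)))"
proof -
  let ?E = "(\<lambda>(r,h). Prop r h) ` (R \<times> H) \<union> (\<lambda>(r,h). Rej r h) ` (R \<times> H)"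
  have fin: "finite ?E" using assms(1) by (auto simp: valid_instance_def)
  have acc: "\<And>r h. h \<in> set (rpref K r) \<Longrightarrow> r \<in> R \<and> h \<in> H"
  proof -
    fix r h assume h: "h \<in> set (rpref K r)"
    show "r \<in> R \<and> h \<in> H"
    proof (cases "r \<in> R")
      case True then show ?thesis using h assms(1) by (auto simp: valid_instance_def)
    next
      case False then show ?thesis using h assms(1) by (auto simp: valid_instance_def)
    qed
  qed
  have inv: "distinct \<tau> \<and> set \<tau> \<subseteq> ?E" using assms(2)
  proof (induction rule: feasible.induct)
    case Nil then show ?case by simp
  next
    case (Propose \<sigma> r h)
    then show ?case using acc[of h r] by (auto simp: proposed_def)
  next
    case (Reject \<sigma> r h)
    have "(r,h) \<in> proposed \<sigma>" using Reject.hyps(2) by (simp add: ousted_def)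
    then have "Prop r h \<in> ?E" using Reject.IH by (auto simp: proposed_def)
    then have "r \<in> R \<and> h \<in> H" by auto
    then show ?case using Reject by (auto simp: rejected_def)
  qed
  then have "length \<tau> = card (set \<tau>)" by (simp add: distinct_card)
  also have "\<dots> \<le> card ?E" using inv fin by (simp add: card_mono)
  finally show ?thesis by simp
qed

lemma some_max_ok:
  assumes "valid_instance R H K"
  shows "maximal_feasible K (some_max K)"
proof -
  obtain x where x: "feasible K x" "\<forall>y. feasible K y \<longrightarrow> length y \<le> length x"
    using ex_has_greatest_nat[of "feasible K" "[]" length] feasible_bounded[OF assms]
      feasible.Nil by blast
  have "maximal_feasible K x"
    unfolding maximal_feasible_def
  proof (intro conjI notI)
    show "feasible K x" by fact
    assume "\<exists>e. feasible K (x @ [e])"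
    then obtain e where "feasible K (x @ [e])" by blast
    with x(2) show False by fastforce
  qed
  then show ?thesis unfolding some_max_def by (rule someI)
qed

theorem proposition4:
  fixes R :: "'r set" and H :: "'h set" and I J :: "('r,'h) inst"
  assumes "valid_instance R H I"
    and "resident_minimal I"
    and "is_extension R H I J"
    and "resident_changeless I J"
    and "hospital_complete R H J"
  shows "resident_minimal J \<and> propI I = propI J
         \<and> tentI I - pendI I \<subseteq> tentI J \<and> tentI J \<subseteq> tentI I"
proof -
  note ext = assms(3)[unfolded is_extension_def]
  have vJ: "valid_instance R H J" using ext by blast
  have rp: "\<And>r. rpref J r = rpref I r" using assms(4) by (simp add: resident_changeless_def)
  define A where "A = {(r,h). h \<in> set (rpref I r)}"
  have acc: "\<And>r h. (r,h) \<in> A \<Longrightarrow> r \<in> R \<and> h \<in> H"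
  proof -
    fix r h assume h: "(r,h) \<in> A"
    show "r \<in> R \<and> h \<in> H"
    proof (cases "r \<in> R")
      case True then show ?thesis using h assms(1) by (auto simp: valid_instance_def A_def)
    next
      case False then show ?thesis using h assms(1) by (auto simp: valid_instance_def A_def)
    qed
  qed
  define \<sigma> where "\<sigma> = some_max I"
  define \<tau> where "\<tau> = some_max J"
  have m\<sigma>: "maximal_feasible I \<sigma>" unfolding \<sigma>_def by (rule some_max_ok[OF assms(1)])
  have m\<tau>: "maximal_feasible J \<tau>" unfolding \<tau>_def by (rule some_max_ok[OF vJ])
  have p\<sigma>: "proposed \<sigma> = A" using assms(2) by (simp add: resident_minimal_def propI_def \<sigma>_def A_def)
  have oIJ: "ousted J M r h" if o: "ousted I M r h" and rh: "(r,h) \<in> A" for M r h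
  proof -
    have rh': "r \<in> R" "h \<in> H" using acc[OF rh] by auto
    obtain zs where zs: "hpref J h = hpref I h @ zs" using ext by blast
    have q: "quota J h = quota I h" using ext rh' by blast
    have rJ: "r \<in> set (hpref J h)" using assms(5) rh' by (simp add: hospital_complete_def)
    have c1: "card (set (hpref I h) \<inter> res_h M h) \<le> card (set (hpref J h) \<inter> res_h M h)"
      by (rule card_mono) (auto simp: zs)
    show ?thesis
    proof (cases "r \<in> set (hpref I h)")
      case True
      have "takeWhile (\<lambda>x. x \<noteq> r) (hpref J h) = takeWhile (\<lambda>x. x \<noteq> r) (hpref I h)"
        using True by (simp add: zs)
      then show ?thesis using o c1 q True rJ unfolding ousted_def by auto
    next
      case False
      have tw: "takeWhile (\<lambda>x. x \<noteq> r) (hpref J h) = hpref I h @ takeWhile (\<lambda>x. x \<noteq> r) zs"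
        using False by (auto simp: zs intro!: takeWhile_append2)
      have c2: "card (set (hpref I h) \<inter> res_h M h)
          \<le> card (set (takeWhile (\<lambda>x. x \<noteq> r) (hpref J h)) \<inter> res_h M h)"
        by (rule card_mono) (auto simp: tw)
      show ?thesis using o c1 c2 q False rJ unfolding ousted_def by auto
    qed
  qed
  have fJ: "feasible J \<sigma>"
  proof -
    have "feasible I \<sigma>" using m\<sigma> by (simp add: maximal_feasible_def)
    then show ?thesis
    proof (induction rule: feasible.induct)
      case Nil then show ?case by (rule feasible.Nil)
    next
      case (Propose \<sigma> r h)
      then show ?case using feasible.Propose[of J \<sigma> r h] rp by simp
    next
      case (Reject \<sigma>' r h)
      have "(r,h) \<in> proposed \<sigma>'" using Reject.hyps(2) by (simp add: ousted_def)
      then have "(r,h) \<in> A" using proposed_acc[OF Reject.hyps(1)] by (auto simp: A_def)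
      then have "ousted J (proposed \<sigma>') r h" using oIJ Reject.hyps(2) by blast
      then show ?case using feasible.Reject[OF Reject.IH] Reject.hyps(3) by blast
    qed
  qed
  have sub: "set \<sigma> \<subseteq> set \<tau>" by (rule confluence[OF fJ m\<tau>])
  have p\<tau>: "proposed \<tau> = A"
  proof
    show "proposed \<tau> \<subseteq> A"
      using proposed_acc[of J \<tau>] m\<tau> rp by (auto simp: maximal_feasible_def A_def)
    show "A \<subseteq> proposed \<tau>" using sub p\<sigma> by (auto simp: proposed_def)
  qed
  have rsub: "rejected \<sigma> \<subseteq> rejected \<tau>" using sub by (auto simp: rejected_def)
  have r\<sigma>: "rejected \<sigma> = {(r,h). ousted I A r h}" using rejected_char[OF m\<sigma>] p\<sigma> by simp
  have r\<tau>: "rejected \<tau> = {(r,h). ousted J A r h}" using rejected_char[OF m\<tau>] p\<tau> by simp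
  have part1: "resident_minimal J \<and> propI I = propI J"
    using p\<sigma> p\<tau> rp unfolding resident_minimal_def propI_def \<sigma>_def \<tau>_def A_def by simp
  have part3: "tentI J \<subseteq> tentI I"
    using rsub p\<sigma> p\<tau> unfolding tentI_def tentative_def \<sigma>_def[symmetric] \<tau>_def[symmetric] by auto
  have part2: "tentI I - pendI I \<subseteq> tentI J"
  proof
    fix x assume x: "x \<in> tentI I - pendI I"
    obtain r h where xe: "x = (r,h)" by (cases x)
    have inA: "(r,h) \<in> A" and nrI: "\<not> ousted I A r h" and rI: "r \<in> set (hpref I h)"
      using x r\<sigma> p\<sigma> unfolding xe tentI_def pendI_def pending_seq_def tentative_def \<sigma>_def[symmetric]
      by auto
    have rh': "r \<in> R" "h \<in> H" using acc[OF inA] by auto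
    obtain zs where zs: "hpref J h = hpref I h @ zs" using ext by blast
    have q: "quota J h = quota I h" using ext rh' by blast
    have c: "card (set (takeWhile (\<lambda>x. x \<noteq> r) (hpref I h)) \<inter> res_h A h)
        \<le> card (set (hpref I h) \<inter> res_h A h)"
      by (rule card_mono) (auto dest: set_takeWhileD)
    have lt: "card (set (takeWhile (\<lambda>x. x \<noteq> r) (hpref I h)) \<inter> res_h A h) < quota I h"
      using nrI inA rI c unfolding ousted_def by auto
    have "takeWhile (\<lambda>x. x \<noteq> r) (hpref J h) = takeWhile (\<lambda>x. x \<noteq> r) (hpref I h)"
      using rI by (simp add: zs)
    then have "\<not> ousted J A r h" using lt q rI zs unfolding ousted_def by auto
    then show "x \<in> tentI J"
      using inA r\<tau> p\<tau> unfolding xe tentI_def tentative_def \<tau>_def[symmetric] by auto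
  qed
  show ?thesis using part1 part2 part3 by blast
qed

end
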